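(* Let $M$ be a monoid with finitely many left ideals and finitely many right ideals. Then $M$ is residually finite if and only if all Schützenberger groups $\Gamma(H)$, for $H$ ranging over the $\mathcal{H}$-classes of $M$, are residually finite.
   Context: Green's relations: $x\mathcal{R}y$ iff $xM=yM$, $x\mathcal{L}y$ iff $Mx=My$, $\mathcal{H}=\mathcal{R}\cap\mathcal{L}$. For an $\mathcal{H}$-class $H$, $\mathrm{Stab}(H)=\{s\in M:Hs=H\}$, $\sigma=\{(x,y)\in\mathrm{Stab}(H)^2:hx=hy \text{ for all } h\in H\}$, and the Schützenberger group of $H$ is the group $\Gamma(H)=\mathrm{Stab}(H)/\sigma$. A monoid/group is residually finite if distinct elements are separated by homomorphisms to finite monoids/groups. No regularity of $M$ is assumed. *)

theory Defs
  imports "HOL-Algebra.Group"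
begin

definition left_ideals :: "('a, 'b) monoid_scheme \<Rightarrow> 'a set set" where
  "left_ideals M = {I. I \<subseteq> carrier M \<and> (\<forall>m\<in>carrier M. \<forall>x\<in>I. m \<otimes>\<^bsub>M\<^esub> x \<in> I)}"

definition right_ideals :: "('a, 'b) monoid_scheme \<Rightarrow> 'a set set" where
  "right_ideals M = {I. I \<subseteq> carrier M \<and> (\<forall>m\<in>carrier M. \<forall>x\<in>I. x \<otimes>\<^bsub>M\<^esub> m \<in> I)}"

definition rprinc :: "('a, 'b) monoid_scheme \<Rightarrow> 'a \<Rightarrow> 'a set" where
  "rprinc M x = (\<lambda>m. x \<otimes>\<^bsub>M\<^esub> m) ` carrier M"

definition lprinc :: "('a, 'b) monoid_scheme \<Rightarrow> 'a \<Rightarrow> 'a set" where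
  "lprinc M x = (\<lambda>m. m \<otimes>\<^bsub>M\<^esub> x) ` carrier M"

definition greenR :: "('a, 'b) monoid_scheme \<Rightarrow> 'a \<Rightarrow> 'a \<Rightarrow> bool" where
  "greenR M x y \<longleftrightarrow> x \<in> carrier M \<and> y \<in> carrier M \<and> rprinc M x = rprinc M y"

definition greenL :: "('a, 'b) monoid_scheme \<Rightarrow> 'a \<Rightarrow> 'a \<Rightarrow> bool" where
  "greenL M x y \<longleftrightarrow> x \<in> carrier M \<and> y \<in> carrier M \<and> lprinc M x = lprinc M y"

definition greenH :: "('a, 'b) monoid_scheme \<Rightarrow> 'a \<Rightarrow> 'a \<Rightarrow> bool" where
  "greenH M x y \<longleftrightarrow> greenR M x y \<and> greenL M x y"

definition Hclass :: "('a, 'b) monoid_scheme \<Rightarrow> 'a \<Rightarrow> 'a set" where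
  "Hclass M x = {y. greenH M x y}"

definition Stab :: "('a, 'b) monoid_scheme \<Rightarrow> 'a set \<Rightarrow> 'a set" where
  "Stab M H = {s \<in> carrier M. (\<lambda>h. h \<otimes>\<^bsub>M\<^esub> s) ` H = H}"

definition schutz_rel :: "('a, 'b) monoid_scheme \<Rightarrow> 'a set \<Rightarrow> ('a \<times> 'a) set" where
  "schutz_rel M H = {(x, y). x \<in> Stab M H \<and> y \<in> Stab M H \<and>
      (\<forall>h\<in>H. h \<otimes>\<^bsub>M\<^esub> x = h \<otimes>\<^bsub>M\<^esub> y)}"

text \<open>The Schuetzenberger group Stab(H)/sigma, with the induced multiplication
  (sigma is a congruence on Stab(H), so the union below is a single class).\<close>
definition schutz_group :: "('a, 'b) monoid_scheme \<Rightarrow> 'a set \<Rightarrow> 'a set monoid" where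
  "schutz_group M H =
     \<lparr> carrier = Stab M H // schutz_rel M H,
       mult = (\<lambda>X Y. \<Union>x\<in>X. \<Union>y\<in>Y. schutz_rel M H `` {x \<otimes>\<^bsub>M\<^esub> y}),
       one = schutz_rel M H `` {\<one>\<^bsub>M\<^esub>} \<rparr>"

definition mon_hom :: "('a, 'c) monoid_scheme \<Rightarrow> ('b, 'd) monoid_scheme \<Rightarrow> ('a \<Rightarrow> 'b) set" where
  "mon_hom M N = {h. h \<in> hom M N \<and> h \<one>\<^bsub>M\<^esub> = \<one>\<^bsub>N\<^esub>}"

text \<open>Residual finiteness. Every finite monoid (group) is isomorphic to one whose
  carrier is a set of naturals, so finite targets are taken with element type nat.\<close>
definition residually_finite_monoid :: "('a, 'b) monoid_scheme \<Rightarrow> bool" where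
  "residually_finite_monoid M \<longleftrightarrow>
     (\<forall>x\<in>carrier M. \<forall>y\<in>carrier M. x \<noteq> y \<longrightarrow>
        (\<exists>(N :: nat monoid) h. monoid N \<and> finite (carrier N) \<and> h \<in> mon_hom M N \<and> h x \<noteq> h y))"

definition residually_finite_group :: "('a, 'b) monoid_scheme \<Rightarrow> bool" where
  "residually_finite_group G \<longleftrightarrow>
     (\<forall>x\<in>carrier G. \<forall>y\<in>carrier G. x \<noteq> y \<longrightarrow>
        (\<exists>(N :: nat monoid) h. group N \<and> finite (carrier N) \<and> h \<in> hom G N \<and> h x \<noteq> h y))"

end

theory Submission
  imports Defs "HOL-Algebra.Bij"
begin


lemma transport:
  fixes G :: "('c,'d) monoid_scheme"
  assumes G: "monoid G" and fin: "finite (carrier G)"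
  shows "\<exists>(N::nat monoid) e. monoid N \<and> finite (carrier N) \<and> e \<in> hom G N \<and>
           e \<one>\<^bsub>G\<^esub> = \<one>\<^bsub>N\<^esub> \<and> inj_on e (carrier G) \<and> (group G \<longrightarrow> group N)"
proof -
  obtain e where "bij_betw e (carrier G) {0..<card (carrier G)}"
    using ex_bij_betw_finite_nat[OF fin] by blast
  hence inj: "inj_on e (carrier G)" by (simp add: bij_betw_def)
  define d where "d = inv_into (carrier G) e"
  have de: "\<And>x. x \<in> carrier G \<Longrightarrow> d (e x) = x" using inj by (simp add: d_def)
  define N :: "nat monoid" where
    "N = \<lparr>carrier = e ` carrier G, mult = (\<lambda>a b. e (d a \<otimes>\<^bsub>G\<^esub> d b)), one = e \<one>\<^bsub>G\<^esub>\<rparr>"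
  have cN: "carrier N = e ` carrier G" and mN: "\<And>a b. a \<otimes>\<^bsub>N\<^esub> b = e (d a \<otimes>\<^bsub>G\<^esub> d b)"
    and oN: "\<one>\<^bsub>N\<^esub> = e \<one>\<^bsub>G\<^esub>" by (simp_all add: N_def)
  have monN: "monoid N"
  proof (rule monoidI)
    fix x y z assume "x \<in> carrier N" "y \<in> carrier N" "z \<in> carrier N"
    then obtain a b c where "a \<in> carrier G" "b \<in> carrier G" "c \<in> carrier G" "x = e a" "y = e b" "z = e c"
      by (auto simp: cN)
    thus "x \<otimes>\<^bsub>N\<^esub> y \<in> carrier N" "x \<otimes>\<^bsub>N\<^esub> y \<otimes>\<^bsub>N\<^esub> z = x \<otimes>\<^bsub>N\<^esub> (y \<otimes>\<^bsub>N\<^esub> z)"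
      using G by (auto simp: cN mN de monoid.m_assoc monoid.m_closed)
  next
    show "\<one>\<^bsub>N\<^esub> \<in> carrier N" using G by (simp add: cN oN monoid.one_closed)
  next
    fix x assume "x \<in> carrier N"
    then obtain a where "a \<in> carrier G" "x = e a" by (auto simp: cN)
    thus "\<one>\<^bsub>N\<^esub> \<otimes>\<^bsub>N\<^esub> x = x" "x \<otimes>\<^bsub>N\<^esub> \<one>\<^bsub>N\<^esub> = x"
      using G by (auto simp: mN oN de monoid.one_closed)
  qed
  have hom: "e \<in> hom G N"
    using G by (auto simp: hom_def cN mN de monoid.m_closed)
  have grp: "group G \<longrightarrow> group N"
  proof
    assume gG: "group G"
    show "group N"
    proof (rule groupI)
      fix x y z assume "x \<in> carrier N" "y \<in> carrier N" "z \<in> carrier N"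
      thus "x \<otimes>\<^bsub>N\<^esub> y \<in> carrier N" "x \<otimes>\<^bsub>N\<^esub> y \<otimes>\<^bsub>N\<^esub> z = x \<otimes>\<^bsub>N\<^esub> (y \<otimes>\<^bsub>N\<^esub> z)"
        using monN by (auto simp: monoid.m_assoc monoid.m_closed)
    next
      show "\<one>\<^bsub>N\<^esub> \<in> carrier N" using monN by (simp add: monoid.one_closed)
    next
      fix x assume "x \<in> carrier N"
      thus "\<one>\<^bsub>N\<^esub> \<otimes>\<^bsub>N\<^esub> x = x" using monN by (simp add: monoid.l_one)
    next
      fix x assume "x \<in> carrier N"
      then obtain a where a: "a \<in> carrier G" "x = e a" by (auto simp: cN)
      have "inv\<^bsub>G\<^esub> a \<in> carrier G" using gG a by (simp add: group.inv_closed)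
      moreover have "e (inv\<^bsub>G\<^esub> a) \<otimes>\<^bsub>N\<^esub> x = \<one>\<^bsub>N\<^esub>"
        using gG a calculation by (simp add: mN oN de group.l_inv)
      ultimately show "\<exists>y\<in>carrier N. y \<otimes>\<^bsub>N\<^esub> x = \<one>\<^bsub>N\<^esub>" by (auto simp: cN)
    qed
  qed
  show ?thesis
    apply (rule exI[of _ N], rule exI[of _ e])
    using monN hom grp inj fin by (simp add: cN oN)
qed




context monoid
begin

lemma rprinc_mem: "y \<in> rprinc G x \<longleftrightarrow> (\<exists>m\<in>carrier G. y = x \<otimes> m)"
  by (auto simp: rprinc_def)

lemma lprinc_mem: "y \<in> lprinc G x \<longleftrightarrow> (\<exists>m\<in>carrier G. y = m \<otimes> x)"
  by (auto simp: lprinc_def)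

lemma greenR_iff:
  assumes "x \<in> carrier G" "y \<in> carrier G"
  shows "greenR G x y \<longleftrightarrow> (\<exists>a\<in>carrier G. y = x \<otimes> a) \<and> (\<exists>b\<in>carrier G. x = y \<otimes> b)"
proof
  assume "greenR G x y"
  hence e: "rprinc G x = rprinc G y" by (simp add: greenR_def)
  have "y \<in> rprinc G y" using assms by (auto simp: rprinc_mem intro!: bexI[of _ \<one>])
  moreover have "x \<in> rprinc G x" using assms by (auto simp: rprinc_mem intro!: bexI[of _ \<one>])
  ultimately show "(\<exists>a\<in>carrier G. y = x \<otimes> a) \<and> (\<exists>b\<in>carrier G. x = y \<otimes> b)"
    using e by (auto simp: rprinc_mem)
next
  assume "(\<exists>a\<in>carrier G. y = x \<otimes> a) \<and> (\<exists>b\<in>carrier G. x = y \<otimes> b)"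
  then obtain a b where ab: "a \<in> carrier G" "b \<in> carrier G" "y = x \<otimes> a" "x = y \<otimes> b" by blast
  have "rprinc G x = rprinc G y"
  proof (auto simp: rprinc_mem)
    fix m assume "m \<in> carrier G"
    show "\<exists>n\<in>carrier G. x \<otimes> m = y \<otimes> n"
      by (rule bexI[of _ "b \<otimes> m"]) (use ab(1,2,4) assms \<open>m \<in> carrier G\<close> in \<open>simp_all add: m_assoc\<close>)
  next
    fix m assume "m \<in> carrier G"
    show "\<exists>n\<in>carrier G. y \<otimes> m = x \<otimes> n"
      by (rule bexI[of _ "a \<otimes> m"]) (use ab(1,2,3) assms \<open>m \<in> carrier G\<close> in \<open>simp_all add: m_assoc\<close>)
  qed
  thus "greenR G x y" using assms by (simp add: greenR_def)
qed

lemma greenL_iff: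
  assumes "x \<in> carrier G" "y \<in> carrier G"
  shows "greenL G x y \<longleftrightarrow> (\<exists>a\<in>carrier G. y = a \<otimes> x) \<and> (\<exists>b\<in>carrier G. x = b \<otimes> y)"
proof
  assume "greenL G x y"
  hence e: "lprinc G x = lprinc G y" by (simp add: greenL_def)
  have "y \<in> lprinc G y" using assms by (auto simp: lprinc_mem intro!: bexI[of _ \<one>])
  moreover have "x \<in> lprinc G x" using assms by (auto simp: lprinc_mem intro!: bexI[of _ \<one>])
  ultimately show "(\<exists>a\<in>carrier G. y = a \<otimes> x) \<and> (\<exists>b\<in>carrier G. x = b \<otimes> y)"
    using e by (auto simp: lprinc_mem)
next
  assume "(\<exists>a\<in>carrier G. y = a \<otimes> x) \<and> (\<exists>b\<in>carrier G. x = b \<otimes> y)"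
  then obtain a b where ab: "a \<in> carrier G" "b \<in> carrier G" "y = a \<otimes> x" "x = b \<otimes> y" by blast
  have "lprinc G x = lprinc G y"
  proof (auto simp: lprinc_mem)
    fix m assume "m \<in> carrier G"
    show "\<exists>n\<in>carrier G. m \<otimes> x = n \<otimes> y"
      by (rule bexI[of _ "m \<otimes> b"]) (use ab(1,2,4) assms \<open>m \<in> carrier G\<close> in \<open>simp_all add: m_assoc\<close>)
  next
    fix m assume "m \<in> carrier G"
    show "\<exists>n\<in>carrier G. m \<otimes> y = n \<otimes> x"
      by (rule bexI[of _ "m \<otimes> a"]) (use ab(1,2,3) assms \<open>m \<in> carrier G\<close> in \<open>simp_all add: m_assoc\<close>)
  qed
  thus "greenL G x y" using assms by (simp add: greenL_def)
qed

lemma greenR_carrier: "greenR G x y \<Longrightarrow> x \<in> carrier G \<and> y \<in> carrier G"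
  by (simp add: greenR_def)
lemma greenL_carrier: "greenL G x y \<Longrightarrow> x \<in> carrier G \<and> y \<in> carrier G"
  by (simp add: greenL_def)

lemma greenR_refl: "x \<in> carrier G \<Longrightarrow> greenR G x x" by (simp add: greenR_def)
lemma greenR_sym: "greenR G x y \<Longrightarrow> greenR G y x" by (auto simp: greenR_def)
lemma greenR_trans: "greenR G x y \<Longrightarrow> greenR G y z \<Longrightarrow> greenR G x z" by (auto simp: greenR_def)
lemma greenL_refl: "x \<in> carrier G \<Longrightarrow> greenL G x x" by (simp add: greenL_def)
lemma greenL_sym: "greenL G x y \<Longrightarrow> greenL G y x" by (auto simp: greenL_def)
lemma greenL_trans: "greenL G x y \<Longrightarrow> greenL G y z \<Longrightarrow> greenL G x z" by (auto simp: greenL_def)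

lemma greenR_lmult:
  assumes "greenR G x y" "m \<in> carrier G"
  shows "greenR G (m \<otimes> x) (m \<otimes> y)"
proof -
  have c: "x \<in> carrier G" "y \<in> carrier G" using assms greenR_carrier by auto
  then obtain a b where "a \<in> carrier G" "b \<in> carrier G" "y = x \<otimes> a" "x = y \<otimes> b"
    using assms greenR_iff by blast
  note ab = this
  show ?thesis
  proof (subst greenR_iff)
    show "m \<otimes> x \<in> carrier G" "m \<otimes> y \<in> carrier G" using c assms by auto
    show "(\<exists>a\<in>carrier G. m \<otimes> y = m \<otimes> x \<otimes> a) \<and> (\<exists>b\<in>carrier G. m \<otimes> x = m \<otimes> y \<otimes> b)"
    proof
      show "\<exists>a\<in>carrier G. m \<otimes> y = m \<otimes> x \<otimes> a"
        by (rule bexI[of _ a]) (simp_all add: ab(1) ab(3) m_assoc c assms)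
      show "\<exists>a\<in>carrier G. m \<otimes> x = m \<otimes> y \<otimes> a"
        by (rule bexI[of _ b]) (simp_all add: ab(2) ab(4)[symmetric] m_assoc c assms)
    qed
  qed
qed

lemma greenL_rmult:
  assumes "greenL G x y" "m \<in> carrier G"
  shows "greenL G (x \<otimes> m) (y \<otimes> m)"
proof -
  have c: "x \<in> carrier G" "y \<in> carrier G" using assms greenL_carrier by auto
  then obtain a b where "a \<in> carrier G" "b \<in> carrier G" "y = a \<otimes> x" "x = b \<otimes> y"
    using assms greenL_iff by blast
  note ab = this
  show ?thesis
  proof (subst greenL_iff)
    show "x \<otimes> m \<in> carrier G" "y \<otimes> m \<in> carrier G" using c assms by auto
    show "(\<exists>a\<in>carrier G. y \<otimes> m = a \<otimes> (x \<otimes> m)) \<and> (\<exists>b\<in>carrier G. x \<otimes> m = b \<otimes> (y \<otimes> m))"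
    proof
      show "\<exists>c\<in>carrier G. y \<otimes> m = c \<otimes> (x \<otimes> m)"
        by (rule bexI[of _ a]) (simp_all add: ab(1) ab(3) m_assoc c assms)
      show "\<exists>c\<in>carrier G. x \<otimes> m = c \<otimes> (y \<otimes> m)"
        by (rule bexI[of _ b]) (simp_all add: ab(2) ab(4)[symmetric] m_assoc[symmetric] c assms)
    qed
  qed
qed

lemma greenR_rmult_self:
  assumes "x \<in> carrier G" "a \<in> carrier G" "b \<in> carrier G" "x \<otimes> a \<otimes> b = x"
  shows "greenR G x (x \<otimes> a)"
proof (subst greenR_iff)
  show "x \<in> carrier G" "x \<otimes> a \<in> carrier G" using assms by auto
  show "(\<exists>c\<in>carrier G. x \<otimes> a = x \<otimes> c) \<and> (\<exists>c\<in>carrier G. x = x \<otimes> a \<otimes> c)"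
    using assms by metis
qed

lemma Hclass_iff: "y \<in> Hclass G x \<longleftrightarrow> greenR G x y \<and> greenL G x y"
  by (simp add: Hclass_def greenH_def)

lemma Hclass_carrier: "Hclass G x \<subseteq> carrier G"
  by (auto simp: Hclass_iff greenR_def)

lemma Hclass_self: "x \<in> carrier G \<Longrightarrow> x \<in> Hclass G x"
  by (simp add: Hclass_iff greenR_refl greenL_refl)

lemma Hclass_eq: "y \<in> Hclass G x \<Longrightarrow> Hclass G y = Hclass G x"
  unfolding Hclass_iff Hclass_def greenH_def
  by (auto intro: greenR_sym greenR_trans greenL_sym greenL_trans)

lemma Stab_one: assumes "H \<subseteq> carrier G" shows "\<one> \<in> Stab G H"
proof -
  have "(\<lambda>h. h \<otimes> \<one>) ` H = (\<lambda>h. h) ` H" using assms by (intro image_cong) auto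
  thus ?thesis by (simp add: Stab_def)
qed

lemma Stab_mult:
  assumes H: "H \<subseteq> carrier G" and a: "a \<in> Stab G H" and b: "b \<in> Stab G H"
  shows "a \<otimes> b \<in> Stab G H"
proof -
  have ac: "a \<in> carrier G" "b \<in> carrier G" and ia: "(\<lambda>h. h \<otimes> a) ` H = H" and ib: "(\<lambda>h. h \<otimes> b) ` H = H"
    using a b by (auto simp: Stab_def)
  have "(\<lambda>h. h \<otimes> (a \<otimes> b)) ` H = (\<lambda>h. h \<otimes> b) ` ((\<lambda>h. h \<otimes> a) ` H)"
    unfolding image_image using H ac by (intro image_cong) (auto simp: m_assoc)
  also have "\<dots> = H" using ia ib by simp
  finally show ?thesis using ac by (simp add: Stab_def)
qed

lemma Stab_carrier: "Stab G H \<subseteq> carrier G" by (auto simp: Stab_def)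

lemma Stab_image: "a \<in> Stab G H \<Longrightarrow> h \<in> H \<Longrightarrow> h \<otimes> a \<in> H"
  by (auto simp: Stab_def)

lemma schutz_rel_equiv: "equiv (Stab G H) (schutz_rel G H)"
  by (rule equivI) (auto simp: schutz_rel_def refl_on_def sym_def trans_def)

abbreviation scl :: "'a set \<Rightarrow> 'a \<Rightarrow> 'a set" where
  "scl H a \<equiv> schutz_rel G H `` {a}"

lemma scl_carrier: "a \<in> Stab G H \<Longrightarrow> scl H a \<in> carrier (schutz_group G H)"
  by (auto simp: schutz_group_def quotient_def)

lemma scl_eq_iff: "a \<in> Stab G H \<Longrightarrow> b \<in> Stab G H \<Longrightarrow> scl H a = scl H b \<longleftrightarrow> (a, b) \<in> schutz_rel G H"
  using eq_equiv_class_iff[OF schutz_rel_equiv] by blast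

lemma scl_mult:
  assumes H: "H \<subseteq> carrier G" and a: "a \<in> Stab G H" and b: "b \<in> Stab G H"
  shows "scl H a \<otimes>\<^bsub>schutz_group G H\<^esub> scl H b = scl H (a \<otimes> b)"
proof -
  have ab: "a \<otimes> b \<in> Stab G H" using Stab_mult assms by blast
  have ac: "a \<in> carrier G" "b \<in> carrier G" using a b Stab_carrier by auto
  have key: "scl H (x \<otimes> y) = scl H (a \<otimes> b)" if "x \<in> scl H a" "y \<in> scl H b" for x y
  proof -
    have xy: "(a, x) \<in> schutz_rel G H" "(b, y) \<in> schutz_rel G H" using that by auto
    hence xs: "x \<in> Stab G H" "y \<in> Stab G H" and xc: "x \<in> carrier G" "y \<in> carrier G"
      using Stab_carrier by (auto simp: schutz_rel_def)
    have "(a \<otimes> b, x \<otimes> y) \<in> schutz_rel G H"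
    proof -
      { fix h assume h: "h \<in> H"
        hence hc: "h \<in> carrier G" using H by auto
        have ha: "h \<otimes> a \<in> H" using Stab_image[OF a h] .
        have "h \<otimes> (a \<otimes> b) = (h \<otimes> a) \<otimes> b" using hc ac by (simp add: m_assoc)
        also have "\<dots> = (h \<otimes> a) \<otimes> y" using xy ha by (auto simp: schutz_rel_def)
        also have "h \<otimes> a = h \<otimes> x" using xy h by (auto simp: schutz_rel_def)
        finally have "h \<otimes> (a \<otimes> b) = h \<otimes> (x \<otimes> y)" using hc xc by (simp add: m_assoc) }
      thus ?thesis using ab Stab_mult[OF H xs] by (auto simp: schutz_rel_def)
    qed
    thus ?thesis using scl_eq_iff[OF ab Stab_mult[OF H xs]] by simp
  qed
  have ia: "a \<in> scl H a" and ib: "b \<in> scl H b" using a b by (auto simp: schutz_rel_def)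
  have "(\<Union>x\<in>scl H a. \<Union>y\<in>scl H b. scl H (x \<otimes> y)) = scl H (a \<otimes> b)"
  proof
    show "(\<Union>x\<in>scl H a. \<Union>y\<in>scl H b. scl H (x \<otimes> y)) \<subseteq> scl H (a \<otimes> b)"
      using key by blast
    show "scl H (a \<otimes> b) \<subseteq> (\<Union>x\<in>scl H a. \<Union>y\<in>scl H b. scl H (x \<otimes> y))"
      using ia ib by blast
  qed
  thus ?thesis by (simp add: schutz_group_def)
qed

lemma scl_one: "scl H \<one> = \<one>\<^bsub>schutz_group G H\<^esub>"
  by (simp add: schutz_group_def)

end



context monoid
begin

lemma forward_direction:
  assumes rf: "residually_finite_monoid G" and x: "x \<in> carrier G"
  shows "residually_finite_group (schutz_group G (Hclass G x))"
  unfolding residually_finite_group_def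
proof (intro ballI impI)
  define H where "H = Hclass G x"
  have Hc: "H \<subseteq> carrier G" using Hclass_carrier H_def by simp
  fix X Y assume X: "X \<in> carrier (schutz_group G (Hclass G x))"
    and Y: "Y \<in> carrier (schutz_group G (Hclass G x))" and XY: "X \<noteq> Y"
  obtain a where a: "a \<in> Stab G H" "X = scl H a"
    using X by (auto simp: schutz_group_def quotient_def H_def)
  obtain b where b: "b \<in> Stab G H" "Y = scl H b"
    using Y by (auto simp: schutz_group_def quotient_def H_def)
  have "(a, b) \<notin> schutz_rel G H" using scl_eq_iff[OF a(1) b(1)] a b XY by simp
  then obtain h where h: "h \<in> H" "h \<otimes> a \<noteq> h \<otimes> b" using a b by (auto simp: schutz_rel_def)
  have hc: "h \<in> carrier G" using h Hc by auto
  have ac: "a \<in> carrier G" "b \<in> carrier G" using a b Stab_carrier by auto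
  obtain N0 :: "nat monoid" and \<phi> where N0: "monoid N0" "finite (carrier N0)"
    and phi: "\<phi> \<in> mon_hom G N0" and sep: "\<phi> (h \<otimes> a) \<noteq> \<phi> (h \<otimes> b)"
    using rf h hc ac unfolding residually_finite_monoid_def by (meson m_closed)
  have phic: "\<And>u. u \<in> carrier G \<Longrightarrow> \<phi> u \<in> carrier N0" using phi by (auto simp: mon_hom_def hom_def)
  have phim: "\<And>u v. u \<in> carrier G \<Longrightarrow> v \<in> carrier G \<Longrightarrow> \<phi> (u \<otimes> v) = \<phi> u \<otimes>\<^bsub>N0\<^esub> \<phi> v"
    using phi by (auto simp: mon_hom_def hom_def)
  define A where "A = \<phi> ` H"
  have Ac: "A \<subseteq> carrier N0" using A_def Hc phic by auto
  have finA: "finite A" using Ac N0(2) finite_subset by blast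
  define B where "B = BijGroup A"
  have gB: "group B" by (simp add: B_def group_BijGroup)
  define P where "P s = (\<lambda>z\<in>A. z \<otimes>\<^bsub>N0\<^esub> \<phi> s)" for s
  have Papp: "P s (\<phi> k) = \<phi> (k \<otimes> s)" if "k \<in> H" "s \<in> Stab G H" for k s
  proof -
    have "k \<in> carrier G" "s \<in> carrier G" using that Hc Stab_carrier by auto
    thus ?thesis using that by (simp add: P_def A_def phim)
  qed
  have PA: "P s z \<in> A" if "z \<in> A" "s \<in> Stab G H" for z s
  proof -
    obtain k where "k \<in> H" "z = \<phi> k" using \<open>z \<in> A\<close> A_def by auto
    thus ?thesis using Papp that Stab_image A_def by auto
  qed
  have PBij: "P s \<in> Bij A" if s: "s \<in> Stab G H" for s
  proof -
    have img: "P s ` A = A"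
    proof
      show "P s ` A \<subseteq> A" using PA s by auto
      show "A \<subseteq> P s ` A"
      proof
        fix z assume "z \<in> A"
        then obtain k where k: "k \<in> H" "z = \<phi> k" using A_def by auto
        have "k \<in> (\<lambda>h. h \<otimes> s) ` H" using s k by (simp add: Stab_def)
        then obtain k' where k': "k' \<in> H" "k = k' \<otimes> s" by auto
        have "z = P s (\<phi> k')" using Papp[OF k'(1) s] k k' by simp
        thus "z \<in> P s ` A" using k' A_def by auto
      qed
    qed
    have "inj_on (P s) A" using finite_surj_inj[OF finA] img by simp
    thus ?thesis using img by (simp add: Bij_def bij_betw_def P_def)
  qed
  have PB: "P s \<in> carrier B" if "s \<in> Stab G H" for s using PBij that by (simp add: B_def BijGroup_def)
  have Pmult: "P (s \<otimes> t) = P t \<otimes>\<^bsub>B\<^esub> P s" if s: "s \<in> Stab G H" and t: "t \<in> Stab G H" for s t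
  proof -
    have sc: "s \<in> carrier G" "t \<in> carrier G" using s t Stab_carrier by auto
    have "P (s \<otimes> t) = compose A (P t) (P s)"
    proof (rule ext)
      fix z show "P (s \<otimes> t) z = compose A (P t) (P s) z"
      proof (cases "z \<in> A")
        case True
        hence zc: "z \<in> carrier N0" using Ac by auto
        have "P s z \<in> A" using PA True s by auto
        thus ?thesis using True zc sc N0(1) phic
          by (simp add: P_def compose_def phim monoid.m_assoc)
      qed (simp add: P_def compose_def)
    qed
    thus ?thesis using PBij s t by (simp add: B_def BijGroup_def)
  qed
  have Pcl: "P s' = P s" if s: "s \<in> Stab G H" and s': "s' \<in> scl H s" for s s'
  proof (rule ext)
    fix z show "P s' z = P s z"
    proof (cases "z \<in> A")
      case True
      then obtain k where k: "k \<in> H" "z = \<phi> k" using A_def by auto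
      have "(s, s') \<in> schutz_rel G H" using s' by simp
      hence "k \<otimes> s = k \<otimes> s'" "s' \<in> Stab G H" using k by (auto simp: schutz_rel_def)
      thus ?thesis using Papp[OF k(1)] k s by simp
    qed (simp add: P_def)
  qed
  define \<Psi> where "\<Psi> Z = inv\<^bsub>B\<^esub> (P (SOME s. s \<in> Z))" for Z
  have Psi_scl: "\<Psi> (scl H s) = inv\<^bsub>B\<^esub> (P s)" if s: "s \<in> Stab G H" for s
  proof -
    have "s \<in> scl H s" using s by (auto simp: schutz_rel_def)
    hence "(SOME s'. s' \<in> scl H s) \<in> scl H s" by (rule someI)
    thus ?thesis using Pcl[OF s] by (simp add: \<Psi>_def)
  qed
  have hom: "\<Psi> \<in> hom (schutz_group G H) B"
  proof (rule homI)
    fix Z assume "Z \<in> carrier (schutz_group G H)"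
    then obtain s where s: "s \<in> Stab G H" "Z = scl H s" by (auto simp: schutz_group_def quotient_def)
    thus "\<Psi> Z \<in> carrier B" using Psi_scl PB gB group.inv_closed by fastforce
  next
    fix Z W assume "Z \<in> carrier (schutz_group G H)" "W \<in> carrier (schutz_group G H)"
    then obtain s t where s: "s \<in> Stab G H" "Z = scl H s" and t: "t \<in> Stab G H" "W = scl H t"
      by (auto simp: schutz_group_def quotient_def)
    have st: "s \<otimes> t \<in> Stab G H" using Stab_mult Hc s t by blast
    have "\<Psi> (Z \<otimes>\<^bsub>schutz_group G H\<^esub> W) = \<Psi> (scl H (s \<otimes> t))" using scl_mult Hc s t by simp
    also have "\<dots> = inv\<^bsub>B\<^esub> (P t \<otimes>\<^bsub>B\<^esub> P s)" using Psi_scl[OF st] Pmult s t by simp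
    also have "\<dots> = inv\<^bsub>B\<^esub> (P s) \<otimes>\<^bsub>B\<^esub> inv\<^bsub>B\<^esub> (P t)"
      using group.inv_mult_group[OF gB] PB s t by simp
    also have "\<dots> = \<Psi> Z \<otimes>\<^bsub>B\<^esub> \<Psi> W" using Psi_scl s t by simp
    finally show "\<Psi> (Z \<otimes>\<^bsub>schutz_group G H\<^esub> W) = \<Psi> Z \<otimes>\<^bsub>B\<^esub> \<Psi> W" .
  qed
  have neq: "\<Psi> X \<noteq> \<Psi> Y"
  proof
    assume "\<Psi> X = \<Psi> Y"
    hence "inv\<^bsub>B\<^esub> (P a) = inv\<^bsub>B\<^esub> (P b)" using Psi_scl a b by simp
    hence "P a = P b" using group.inv_inv[OF gB] PB a b by metis
    hence "P a (\<phi> h) = P b (\<phi> h)" by simp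
    thus False using Papp h a b sep by simp
  qed
  have finB: "finite (carrier B)"
  proof -
    have "carrier B \<subseteq> PiE A (\<lambda>_. A)"
      by (auto simp: B_def BijGroup_def Bij_def PiE_def bij_betw_def)
    moreover have "finite (PiE A (\<lambda>_. A))" using finA by (simp add: finite_PiE)
    ultimately show ?thesis using finite_subset by blast
  qed
  obtain N :: "nat monoid" and e where N: "monoid N" "finite (carrier N)" "e \<in> hom B N"
    "inj_on e (carrier B)" "group B \<longrightarrow> group N"
    using transport[OF group.is_monoid[OF gB] finB] by blast
  have "e \<circ> \<Psi> \<in> hom (schutz_group G H) N" using hom N(3) hom_compose by blast
  moreover have "(e \<circ> \<Psi>) X \<noteq> (e \<circ> \<Psi>) Y"
  proof -
    have "\<Psi> X \<in> carrier B" "\<Psi> Y \<in> carrier B" using hom X Y H_def by (auto simp: hom_def)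
    thus ?thesis using neq N(4) by (auto simp: inj_on_def)
  qed
  ultimately show "\<exists>(N::nat monoid) h. group N \<and> finite (carrier N) \<and>
      h \<in> hom (schutz_group G (Hclass G x)) N \<and> h X \<noteq> h Y"
    using N gB H_def by blast
qed

end



lemma finite_image_label:
  assumes fin: "finite (F ` A)" and eq: "\<And>u v. u \<in> A \<Longrightarrow> v \<in> A \<Longrightarrow> F u = F v \<Longrightarrow> G u = G v"
  shows "finite (G ` A)"
proof -
  define c where "c y = (SOME u. u \<in> A \<and> F u = y)" for y
  have "G ` A \<subseteq> (\<lambda>y. G (c y)) ` (F ` A)"
  proof
    fix z assume "z \<in> G ` A"
    then obtain u where u: "u \<in> A" "z = G u" by blast
    have "\<exists>v. v \<in> A \<and> F v = F u" using u by blast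
    hence "c (F u) \<in> A \<and> F (c (F u)) = F u" unfolding c_def by (rule someI_ex)
    hence "G (c (F u)) = G u" using eq u(1) by blast
    thus "z \<in> (\<lambda>y. G (c y)) ` (F ` A)" using u by force
  qed
  moreover have "finite ((\<lambda>y. G (c y)) ` (F ` A))" using fin by simp
  ultimately show ?thesis using finite_subset by blast
qed

lemma quotient_image: "A // r = (\<lambda>x. r `` {x}) ` A"
  unfolding quotient_def by blast

lemma finite_quot_label:
  assumes eqv: "equiv A r" and fin: "finite (F ` A)"
    and lab: "\<And>u v. u \<in> A \<Longrightarrow> v \<in> A \<Longrightarrow> F u = F v \<Longrightarrow> (u, v) \<in> r"
  shows "finite (A // r)"
proof -
  have "finite ((\<lambda>x. r `` {x}) ` A)"
  proof (rule finite_image_label[OF fin])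
    fix u v assume "u \<in> A" "v \<in> A" "F u = F v"
    hence "(u, v) \<in> r" by (rule lab)
    thus "r `` {u} = r `` {v}" using equiv_class_eq[OF eqv] by blast
  qed
  thus ?thesis by (simp add: quotient_image)
qed

context monoid
begin

lemma rmult_Lclass:
  assumes c: "h \<in> carrier G" "u \<in> carrier G" "a \<in> carrier G" "b \<in> carrier G"
    and ua: "u = h \<otimes> a" and hb: "h = u \<otimes> b" and k: "greenL G h k"
  shows "k \<otimes> a \<otimes> b = k \<and> greenL G u (k \<otimes> a) \<and> greenR G k (k \<otimes> a)"
proof -
  have kc: "k \<in> carrier G" using k greenL_carrier by auto
  obtain s where s: "s \<in> carrier G" "k = s \<otimes> h" using greenL_iff[OF c(1) kc] k by blast
  have "k \<otimes> a \<otimes> b = s \<otimes> (h \<otimes> a \<otimes> b)" using s c by (simp add: m_assoc)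
  also have "h \<otimes> a \<otimes> b = h" by (simp only: ua[symmetric] hb[symmetric])
  finally have e: "k \<otimes> a \<otimes> b = k" using s by simp
  have "greenL G (h \<otimes> a) (k \<otimes> a)" using greenL_rmult[OF k c(3)] .
  hence "greenL G u (k \<otimes> a)" using ua by simp
  moreover have "greenR G k (k \<otimes> a)" using greenR_rmult_self[OF kc c(3,4) e] .
  ultimately show ?thesis using e by simp
qed

lemma H_transitive:
  assumes hc: "h \<in> carrier G" and u: "u \<in> Hclass G h"
  shows "\<exists>a\<in>Stab G (Hclass G h). u = h \<otimes> a"
proof -
  have R: "greenR G h u" and L: "greenL G h u" using u by (auto simp: Hclass_iff)
  have uc: "u \<in> carrier G" using R greenR_carrier by auto
  obtain a b where ab: "a \<in> carrier G" "b \<in> carrier G" "u = h \<otimes> a" "h = u \<otimes> b"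
    using greenR_iff[OF hc uc] R by blast
  have "(\<lambda>k. k \<otimes> a) ` Hclass G h = Hclass G h"
  proof
    show "(\<lambda>k. k \<otimes> a) ` Hclass G h \<subseteq> Hclass G h"
    proof
      fix z assume "z \<in> (\<lambda>k. k \<otimes> a) ` Hclass G h"
      then obtain k where k: "k \<in> Hclass G h" "z = k \<otimes> a" by auto
      have kR: "greenR G h k" and kL: "greenL G h k" using k by (auto simp: Hclass_iff)
      have "greenL G u (k \<otimes> a) \<and> greenR G k (k \<otimes> a)"
        using rmult_Lclass[OF hc uc ab(1,2,3,4) kL] by blast
      thus "z \<in> Hclass G h" using k kR L
        by (auto simp: Hclass_iff intro: greenR_trans greenL_trans)
    qed
    show "Hclass G h \<subseteq> (\<lambda>k. k \<otimes> a) ` Hclass G h"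
    proof
      fix k assume k: "k \<in> Hclass G h"
      have kR: "greenR G h k" and kL: "greenL G h k" using k by (auto simp: Hclass_iff)
      have kL': "greenL G u k" using greenL_trans[OF greenL_sym[OF L] kL] .
      have r: "k \<otimes> b \<otimes> a = k \<and> greenL G h (k \<otimes> b) \<and> greenR G k (k \<otimes> b)"
        using rmult_Lclass[OF uc hc ab(2,1) ab(4,3) kL'] .
      hence "k \<otimes> b \<in> Hclass G h" using kR by (auto simp: Hclass_iff intro: greenR_trans)
      thus "k \<in> (\<lambda>k. k \<otimes> a) ` Hclass G h" using r by force
    qed
  qed
  thus ?thesis using ab(1,3) by (auto simp: Stab_def)
qed

lemma free_L:
  assumes "greenL G u k" "u \<otimes> a = u \<otimes> b" "a \<in> carrier G" "b \<in> carrier G"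
  shows "k \<otimes> a = k \<otimes> b"
proof -
  have c: "u \<in> carrier G" "k \<in> carrier G" using assms(1) greenL_carrier by auto
  obtain t where t: "t \<in> carrier G" "k = t \<otimes> u" using greenL_iff[OF c] assms(1) by blast
  thus ?thesis using assms c by (simp add: m_assoc)
qed

lemma Stab_L_part:
  assumes uv: "greenL G u v" and s: "s \<in> Stab G (Hclass G u)" and k: "k \<in> Hclass G v"
  shows "k \<otimes> s \<in> Hclass G v"
proof -
  have uc: "u \<in> carrier G" "v \<in> carrier G" using uv greenL_carrier by auto
  have sc: "s \<in> carrier G" using s Stab_carrier by auto
  have kR: "greenR G v k" and kL: "greenL G v k" using k by (auto simp: Hclass_iff)
  have kc: "k \<in> carrier G" using kR greenR_carrier by auto
  have ku: "greenL G u k" using greenL_trans[OF uv kL] .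
  have us: "u \<otimes> s \<in> Hclass G u" using Stab_image[OF s Hclass_self[OF uc(1)]] .
  hence usR: "greenR G u (u \<otimes> s)" and usL: "greenL G u (u \<otimes> s)" by (auto simp: Hclass_iff)
  have usc: "u \<otimes> s \<in> carrier G" using uc sc by simp
  obtain c where c: "c \<in> carrier G" "u = u \<otimes> s \<otimes> c" using greenR_iff[OF uc(1) usc] usR by blast
  obtain t where t: "t \<in> carrier G" "k = t \<otimes> u" using greenL_iff[OF uc(1) kc] ku by blast
  have "k \<otimes> s \<otimes> c = t \<otimes> (u \<otimes> s \<otimes> c)" using t(1) sc c(1) uc by (simp add: t(2) m_assoc)
  hence e: "k \<otimes> s \<otimes> c = k" by (simp only: c(2)[symmetric] t(2)[symmetric])
  have R2: "greenR G k (k \<otimes> s)" using greenR_rmult_self[OF kc sc c(1) e] .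
  have "greenL G (u \<otimes> s) (k \<otimes> s)" using greenL_rmult[OF ku sc] .
  hence "greenL G v (k \<otimes> s)" using greenL_trans[OF greenL_sym[OF uv] greenL_trans[OF usL]] by simp
  thus ?thesis using R2 kR by (auto simp: Hclass_iff intro: greenR_trans)
qed

lemma Stab_L_sub:
  assumes uv: "greenL G u v"
  shows "Stab G (Hclass G u) \<subseteq> Stab G (Hclass G v)"
proof
  fix s assume s: "s \<in> Stab G (Hclass G u)"
  have uc: "u \<in> carrier G" "v \<in> carrier G" using uv greenL_carrier by auto
  have sc: "s \<in> carrier G" using s Stab_carrier by auto
  have img: "(\<lambda>h. h \<otimes> s) ` Hclass G u = Hclass G u" using s unfolding Stab_def by blast
  have "u \<in> (\<lambda>h. h \<otimes> s) ` Hclass G u" by (metis img Hclass_self uc(1))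
  then obtain k0 where k0: "k0 \<in> Hclass G u" "u = k0 \<otimes> s" by auto
  obtain s' where s': "s' \<in> Stab G (Hclass G u)" "k0 = u \<otimes> s'" using H_transitive[OF uc(1) k0(1)] by blast
  have s'c: "s' \<in> carrier G" using s' Stab_carrier by auto
  have "(\<lambda>k. k \<otimes> s) ` Hclass G v = Hclass G v"
  proof
    show "(\<lambda>k. k \<otimes> s) ` Hclass G v \<subseteq> Hclass G v" using Stab_L_part[OF uv s] by auto
    show "Hclass G v \<subseteq> (\<lambda>k. k \<otimes> s) ` Hclass G v"
    proof
      fix k assume k: "k \<in> Hclass G v"
      have kc: "k \<in> carrier G" using k Hclass_carrier by auto
      have ks': "k \<otimes> s' \<in> Hclass G v" using Stab_L_part[OF uv s'(1) k] .
      have ku: "greenL G u k" using greenL_trans[OF uv] k by (auto simp: Hclass_iff)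
      have e1: "u \<otimes> (s' \<otimes> s) = u \<otimes> \<one>" using uc sc s'c by (simp add: m_assoc[symmetric] s'(2)[symmetric] k0(2)[symmetric])
      have "k \<otimes> (s' \<otimes> s) = k \<otimes> \<one>" by (rule free_L[OF ku e1]) (use sc s'c in simp_all)
      hence "k = k \<otimes> s' \<otimes> s" using kc sc s'c by (simp add: m_assoc)
      thus "k \<in> (\<lambda>k. k \<otimes> s) ` Hclass G v" using ks' by blast
    qed
  qed
  thus "s \<in> Stab G (Hclass G v)" using sc unfolding Stab_def by blast
qed

lemma Stab_L_eq: "greenL G u v \<Longrightarrow> Stab G (Hclass G u) = Stab G (Hclass G v)"
  using Stab_L_sub greenL_sym by blast

end



context monoid
begin

lemma rprinc_right_ideal: "x \<in> carrier G \<Longrightarrow> rprinc G x \<in> right_ideals G"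
  by (auto simp: right_ideals_def rprinc_def m_assoc)

lemma lprinc_left_ideal: "x \<in> carrier G \<Longrightarrow> lprinc G x \<in> left_ideals G"
  by (auto simp: left_ideals_def lprinc_def m_assoc[symmetric])

lemma kappa_R:
  assumes finR: "finite (right_ideals G)"
    and Lc: "L \<subseteq> carrier G"
  shows "equiv L {(u,v). u \<in> L \<and> v \<in> L \<and> greenR G u v}
    \<and> (\<forall>m\<in>carrier G. \<forall>u v. (u,v) \<in> {(u,v). u \<in> L \<and> v \<in> L \<and> greenR G u v} \<longrightarrow> m \<otimes> u \<in> L \<longrightarrow> m \<otimes> v \<in> L
          \<longrightarrow> (m \<otimes> u, m \<otimes> v) \<in> {(u,v). u \<in> L \<and> v \<in> L \<and> greenR G u v})
    \<and> finite (L // {(u,v). u \<in> L \<and> v \<in> L \<and> greenR G u v})"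
proof (intro conjI)
  show eq: "equiv L {(u,v). u \<in> L \<and> v \<in> L \<and> greenR G u v}"
    using Lc by (intro equivI) (auto simp: refl_on_def sym_def trans_def intro: greenR_refl greenR_sym greenR_trans)
  show "\<forall>m\<in>carrier G. \<forall>u v. (u,v) \<in> {(u,v). u \<in> L \<and> v \<in> L \<and> greenR G u v} \<longrightarrow> m \<otimes> u \<in> L \<longrightarrow> m \<otimes> v \<in> L
          \<longrightarrow> (m \<otimes> u, m \<otimes> v) \<in> {(u,v). u \<in> L \<and> v \<in> L \<and> greenR G u v}"
    by (auto intro: greenR_lmult)
  show "finite (L // {(u,v). u \<in> L \<and> v \<in> L \<and> greenR G u v})"
  proof (rule finite_quot_label[OF eq, of "rprinc G"])
    show "finite (rprinc G ` L)"
      using finR rprinc_right_ideal Lc finite_subset[of "rprinc G ` L" "right_ideals G"] by blast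
    fix u v assume "u \<in> L" "v \<in> L" "rprinc G u = rprinc G v"
    thus "(u, v) \<in> {(u,v). u \<in> L \<and> v \<in> L \<and> greenR G u v}" using Lc by (auto simp: greenR_def)
  qed
qed


lemma kappa_G:
  assumes rfg: "\<forall>x\<in>carrier G. residually_finite_group (schutz_group G (Hclass G x))"
    and finR: "finite (right_ideals G)"
    and u0: "u0 \<in> carrier G" and L_def: "L = {v. greenL G u0 v}"
    and w: "w \<in> L" and w': "w' \<in> L" and ww': "greenR G w w'" and neq: "w \<noteq> w'"
  shows "\<exists>\<kappa>. equiv L \<kappa> \<and> (\<forall>m\<in>carrier G. \<forall>u v. (u,v) \<in> \<kappa> \<longrightarrow> m \<otimes> u \<in> L \<longrightarrow> m \<otimes> v \<in> L
          \<longrightarrow> (m \<otimes> u, m \<otimes> v) \<in> \<kappa>) \<and> finite (L // \<kappa>) \<and> (w, w') \<notin> \<kappa>"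
proof -
  have Lc: "L \<subseteq> carrier G" using L_def greenL_carrier by auto
  have LL: "greenL G u v" if "u \<in> L" "v \<in> L" for u v
    using that L_def by (auto intro: greenL_trans greenL_sym)
  define H0 where "H0 = Hclass G w"
  define S0 where "S0 = Stab G H0"
  define \<Gamma> where "\<Gamma> = schutz_group G H0"
  have wc: "w \<in> carrier G" using w Lc by auto
  have H0c: "H0 \<subseteq> carrier G" using Hclass_carrier H0_def by simp
  have w'H: "w' \<in> H0" using ww' LL[OF w w'] H0_def by (simp add: Hclass_iff)
  obtain c where c: "c \<in> S0" "w' = w \<otimes> c" using H_transitive[OF wc] w'H H0_def S0_def by blast
  have oneS: "\<one> \<in> S0" using Stab_one[OF H0c] S0_def by simp
  have S0c: "S0 \<subseteq> carrier G" using Stab_carrier S0_def by simp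
  have S0cD[simp]: "a \<in> carrier G" if "a \<in> S0" for a using that S0c by auto
  have StabL: "Stab G (Hclass G v) = S0" if "v \<in> L" for v
    using Stab_L_eq[OF LL[OF that w]] S0_def H0_def by simp
  have free: "scl H0 a = scl H0 b" if v: "v \<in> L" and ab: "a \<in> S0" "b \<in> S0" and e: "v \<otimes> a = v \<otimes> b" for v a b
  proof -
    have "\<forall>h\<in>H0. h \<otimes> a = h \<otimes> b"
    proof
      fix h assume "h \<in> H0"
      hence "greenL G w h" using H0_def by (simp add: Hclass_iff)
      hence "greenL G v h" using greenL_trans[OF LL[OF v w]] by simp
      thus "h \<otimes> a = h \<otimes> b" using free_L e ab S0c by blast
    qed
    hence "(a, b) \<in> schutz_rel G H0" using ab S0_def by (simp add: schutz_rel_def)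
    thus ?thesis using scl_eq_iff ab S0_def by blast
  qed
  have cne: "scl H0 c \<noteq> scl H0 \<one>"
  proof
    assume "scl H0 c = scl H0 \<one>"
    hence "(c, \<one>) \<in> schutz_rel G H0" using scl_eq_iff c oneS S0_def by blast
    hence "w \<otimes> c = w \<otimes> \<one>" using Hclass_self[OF wc] H0_def by (auto simp: schutz_rel_def)
    thus False using c wc neq by simp
  qed
  obtain N :: "nat monoid" and \<phi> where N: "group N" "finite (carrier N)" and
    phi: "\<phi> \<in> hom \<Gamma> N" and phisep: "\<phi> (scl H0 c) \<noteq> \<phi> (scl H0 \<one>)"
    using rfg wc cne scl_carrier c oneS unfolding residually_finite_group_def \<Gamma>_def H0_def S0_def by metis
  have phic: "\<phi> (scl H0 a) \<in> carrier N" if "a \<in> S0" for a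
    using phi scl_carrier that S0_def \<Gamma>_def by (auto simp: hom_def)
  have phim: "\<phi> (scl H0 (a \<otimes> b)) = \<phi> (scl H0 a) \<otimes>\<^bsub>N\<^esub> \<phi> (scl H0 b)" if "a \<in> S0" "b \<in> S0" for a b
  proof -
    have "scl H0 (a \<otimes> b) = scl H0 a \<otimes>\<^bsub>\<Gamma>\<^esub> scl H0 b" using scl_mult[OF H0c] that S0_def \<Gamma>_def by simp
    thus ?thesis using phi scl_carrier that S0_def \<Gamma>_def by (simp add: hom_def)
  qed
  have phi1: "\<phi> (scl H0 \<one>) = \<one>\<^bsub>N\<^esub>"
  proof -
    have "\<phi> (scl H0 \<one>) \<otimes>\<^bsub>N\<^esub> \<phi> (scl H0 \<one>) = \<phi> (scl H0 \<one>)"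
      using phim[OF oneS oneS] phic[OF oneS] by simp
    thus ?thesis using group.l_cancel_one[OF N(1)] phic[OF oneS] by blast
  qed
  have cancel1: "y = \<one>\<^bsub>N\<^esub>" if "x \<in> carrier N" "y \<in> carrier N" "x \<otimes>\<^bsub>N\<^esub> y = x" for x y
  proof -
    show ?thesis using group.l_cancel_one[OF N(1)] that by blast
  qed
  define \<kappa> where "\<kappa> = {(u,v). u \<in> L \<and> v \<in> L \<and> greenR G u v \<and> (\<exists>a\<in>S0. v = u \<otimes> a \<and> \<phi> (scl H0 a) = \<one>\<^bsub>N\<^esub>)}"
  have inH: "v \<in> Hclass G u" if "u \<in> L" "v \<in> L" "greenR G u v" for u v
    using that LL by (simp add: Hclass_iff)
  have eqv: "equiv L \<kappa>"
  proof (rule equivI)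
    show "\<kappa> \<subseteq> L \<times> L" by (auto simp: \<kappa>_def)
    show "refl_on L \<kappa>"
    proof (rule refl_onI)
      fix u assume u: "u \<in> L"
      hence "u \<in> carrier G" using Lc by auto
      thus "(u, u) \<in> \<kappa>" using u oneS phi1 by (auto simp: \<kappa>_def intro!: greenR_refl bexI[of _ \<one>])
    qed
    show "sym \<kappa>"
    proof (rule symI)
      fix u v assume "(u, v) \<in> \<kappa>"
      then obtain a where uv: "u \<in> L" "v \<in> L" "greenR G u v" and a: "a \<in> S0" "v = u \<otimes> a" "\<phi> (scl H0 a) = \<one>\<^bsub>N\<^esub>"
        by (auto simp: \<kappa>_def)
      have uc: "u \<in> carrier G" using uv Lc by auto
      have "u \<in> Hclass G v" using inH[OF uv(2,1) greenR_sym[OF uv(3)]] .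
      then obtain b where b: "b \<in> S0" "u = v \<otimes> b" using H_transitive[of v u] StabL[OF uv(2)] uv Lc by blast
      have "u \<otimes> (a \<otimes> b) = u \<otimes> \<one>"
      proof -
        have "u \<otimes> (a \<otimes> b) = (u \<otimes> a) \<otimes> b" using uc a(1) b(1) S0c by (auto simp: m_assoc)
        also have "\<dots> = u" using a(2)[symmetric] b(2)[symmetric] by simp
        finally show ?thesis using uc by simp
      qed
      hence "scl H0 (a \<otimes> b) = scl H0 \<one>" using free[OF uv(1)] a(1) b(1) oneS Stab_mult[OF H0c] S0_def by blast
      hence "\<phi> (scl H0 a) \<otimes>\<^bsub>N\<^esub> \<phi> (scl H0 b) = \<one>\<^bsub>N\<^esub>" using phim[OF a(1) b(1)] phi1 by simp
      hence "\<phi> (scl H0 b) = \<one>\<^bsub>N\<^esub>" using a(3) phic[OF b(1)] N(1) by (simp add: group.is_monoid monoid.l_one)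
      thus "(v, u) \<in> \<kappa>" using uv b by (auto simp: \<kappa>_def intro: greenR_sym)
    qed
    show "trans \<kappa>"
    proof (rule transI)
      fix u v z assume "(u, v) \<in> \<kappa>" "(v, z) \<in> \<kappa>"
      then obtain a b where uv: "u \<in> L" "v \<in> L" "z \<in> L" "greenR G u v" "greenR G v z"
        and a: "a \<in> S0" "v = u \<otimes> a" "\<phi> (scl H0 a) = \<one>\<^bsub>N\<^esub>"
        and b: "b \<in> S0" "z = v \<otimes> b" "\<phi> (scl H0 b) = \<one>\<^bsub>N\<^esub>"
        by (auto simp: \<kappa>_def)
      have uc: "u \<in> carrier G" using uv Lc by auto
      have ab: "a \<otimes> b \<in> S0" using Stab_mult[OF H0c] a b S0_def by blast
      have "z = u \<otimes> (a \<otimes> b)" using uc a b S0c by (simp add: m_assoc)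
      moreover have "\<phi> (scl H0 (a \<otimes> b)) = \<one>\<^bsub>N\<^esub>" using phim a b N(1)
        by (simp add: group.is_monoid monoid.l_one monoid.one_closed)
      ultimately show "(u, z) \<in> \<kappa>" using uv ab by (auto simp: \<kappa>_def intro: greenR_trans)
    qed
  qed
  have compat: "\<forall>m\<in>carrier G. \<forall>u v. (u,v) \<in> \<kappa> \<longrightarrow> m \<otimes> u \<in> L \<longrightarrow> m \<otimes> v \<in> L \<longrightarrow> (m \<otimes> u, m \<otimes> v) \<in> \<kappa>"
  proof (intro ballI allI impI)
    fix m u v assume m: "m \<in> carrier G" and "(u, v) \<in> \<kappa>" and mu: "m \<otimes> u \<in> L" and mv: "m \<otimes> v \<in> L"
    then obtain a where uv: "u \<in> L" "v \<in> L" "greenR G u v" and a: "a \<in> S0" "v = u \<otimes> a" "\<phi> (scl H0 a) = \<one>\<^bsub>N\<^esub>"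
      by (auto simp: \<kappa>_def)
    have "m \<otimes> v = (m \<otimes> u) \<otimes> a" using a m uv Lc S0c by (auto simp: m_assoc)
    thus "(m \<otimes> u, m \<otimes> v) \<in> \<kappa>" using mu mv a greenR_lmult[OF uv(3) m] by (auto simp: \<kappa>_def)
  qed
  define base where "base P = (SOME h. h \<in> L \<and> rprinc G h = P)" for P
  have base: "base (rprinc G u) \<in> L \<and> rprinc G (base (rprinc G u)) = rprinc G u" if "u \<in> L" for u
    unfolding base_def by (rule someI[of _ u]) (use that in simp)
  have exa: "\<exists>a. a \<in> S0 \<and> u = base (rprinc G u) \<otimes> a" if u: "u \<in> L" for u
  proof -
    let ?b = "base (rprinc G u)"
    have b: "?b \<in> L" "rprinc G ?b = rprinc G u" using base[OF u] by auto
    have "greenR G ?b u" using b u Lc by (auto simp: greenR_def)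
    hence "u \<in> Hclass G ?b" using inH b u by blast
    thus ?thesis using H_transitive[of ?b u] StabL[OF b(1)] b Lc by blast
  qed
  define coord where "coord u = (SOME a. a \<in> S0 \<and> u = base (rprinc G u) \<otimes> a)" for u
  have coord: "coord u \<in> S0 \<and> u = base (rprinc G u) \<otimes> coord u" if "u \<in> L" for u
    unfolding coord_def using someI_ex[OF exa[OF that]] .
  define F where "F u = (rprinc G u, \<phi> (scl H0 (coord u)))" for u
  have fin: "finite (L // \<kappa>)"
  proof (rule finite_quot_label[OF eqv, of F])
    have "F ` L \<subseteq> right_ideals G \<times> carrier N"
      using coord phic rprinc_right_ideal Lc by (auto simp: F_def)
    moreover have "finite (right_ideals G \<times> carrier N)" using finR N(2) by simp
    ultimately show "finite (F ` L)" using finite_subset by blast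
  next
    fix u v assume u: "u \<in> L" and v: "v \<in> L" and Fe: "F u = F v"
    have rp: "rprinc G u = rprinc G v" and pe: "\<phi> (scl H0 (coord u)) = \<phi> (scl H0 (coord v))"
      using Fe by (auto simp: F_def)
    have uc: "u \<in> carrier G" "v \<in> carrier G" using u v Lc by auto
    have R: "greenR G u v" using rp uc by (simp add: greenR_def)
    obtain c' where c': "c' \<in> S0" "v = u \<otimes> c'"
      using H_transitive[of u v] inH[OF u v R] StabL[OF u] uc by blast
    define bb where "bb = base (rprinc G u)"
    define xu where "xu = coord u"
    define xv where "xv = coord v"
    have bL: "bb \<in> L" using base[OF u] bb_def by simp
    have bc: "bb \<in> carrier G" using bL Lc by auto
    have cu: "xu \<in> S0" "u = bb \<otimes> xu" using coord[OF u] unfolding bb_def xu_def by blast+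
    have cv: "xv \<in> S0" "v = bb \<otimes> xv" using coord[OF v] rp unfolding bb_def xv_def by metis+
    have "bb \<otimes> xv = bb \<otimes> (xu \<otimes> c')"
    proof -
      have "bb \<otimes> xv = u \<otimes> c'" using cv(2)[symmetric] c'(2) by simp
      also have "\<dots> = bb \<otimes> xu \<otimes> c'" using cu(2) by simp
      finally show ?thesis using bc cu(1) c'(1) by (simp add: m_assoc)
    qed
    hence "scl H0 xv = scl H0 (xu \<otimes> c')"
      using free[OF bL cv(1)] Stab_mult[OF H0c] cu(1) c'(1) S0_def by blast
    hence "\<phi> (scl H0 xu) \<otimes>\<^bsub>N\<^esub> \<phi> (scl H0 c') = \<phi> (scl H0 xu)"
      using phim[OF cu(1) c'(1)] pe xu_def xv_def by simp
    hence "\<phi> (scl H0 c') = \<one>\<^bsub>N\<^esub>" using cancel1 phic cu(1) c'(1) by blast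
    thus "(u, v) \<in> \<kappa>" using u v R c'(1) c'(2) unfolding \<kappa>_def by blast
  qed
  have sep: "(w, w') \<notin> \<kappa>"
  proof
    assume "(w, w') \<in> \<kappa>"
    then obtain a where a: "a \<in> S0" "w' = w \<otimes> a" "\<phi> (scl H0 a) = \<one>\<^bsub>N\<^esub>" by (auto simp: \<kappa>_def)
    have "w \<otimes> a = w \<otimes> c" using a c by simp
    hence "scl H0 a = scl H0 c" using free[OF w a(1) c(1)] by simp
    thus False using a(3) phi1 phisep by simp
  qed
  show ?thesis using eqv compat fin sep by blast
qed

end



context monoid
begin

definition lcong :: "('a \<times> 'a) set \<Rightarrow> bool" where
  "lcong r \<longleftrightarrow> (\<forall>m\<in>carrier G. \<forall>u v. (u, v) \<in> r \<longrightarrow> (m \<otimes> u, m \<otimes> v) \<in> r)"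

lemma left_idealD: "I \<in> left_ideals G \<Longrightarrow> m \<in> carrier G \<Longrightarrow> x \<in> I \<Longrightarrow> m \<otimes> x \<in> I"
  by (auto simp: left_ideals_def)

lemma left_ideal_carrier: "I \<in> left_ideals G \<Longrightarrow> I \<subseteq> carrier G"
  by (auto simp: left_ideals_def)

lemma finite_psi:
  assumes finL: "finite (left_ideals G)" and I': "I' \<in> left_ideals G"
    and eq': "equiv I' r" and lc: "lcong r" and fin': "finite (I' // r)" and Ac: "A \<subseteq> carrier G"
  shows "finite ((\<lambda>u. (\<lambda>m. if m \<in> carrier G \<and> m \<otimes> u \<in> I' then Some (r `` {m \<otimes> u}) else None)) ` A)"
    (is "finite (?psi ` A)")
proof -
  define rep where "rep P = (SOME d. d \<in> carrier G \<and> lprinc G d = P)" for P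
  define G0 where "G0 = rep ` (lprinc G ` carrier G)"
  have finG0: "finite G0"
  proof -
    have "lprinc G ` carrier G \<subseteq> left_ideals G" using lprinc_left_ideal by auto
    hence "finite (lprinc G ` carrier G)" using finL finite_subset by blast
    thus ?thesis by (simp add: G0_def)
  qed
  have G0rep: "\<exists>d\<in>G0. greenL G m d" if m: "m \<in> carrier G" for m
  proof -
    have "rep (lprinc G m) \<in> carrier G \<and> lprinc G (rep (lprinc G m)) = lprinc G m"
      unfolding rep_def by (rule someI[of _ m]) (use m in simp)
    thus ?thesis using m by (auto simp: G0_def greenL_def)
  qed
  define S where "S = insert None (Some ` (I' // r))"
  define F where "F u = restrict (?psi u) G0" for u
  have "F ` A \<subseteq> PiE G0 (\<lambda>_. S)"
    by (auto simp: F_def S_def quotientI left_idealD[OF I'])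
  moreover have "finite (PiE G0 (\<lambda>_. S))" using finG0 fin' by (simp add: finite_PiE S_def)
  ultimately have finF: "finite (F ` A)" using finite_subset by blast
  have I'c: "I' \<subseteq> carrier G" using left_ideal_carrier[OF I'] .
  show ?thesis
  proof (rule finite_image_label[OF finF])
    fix u v assume u: "u \<in> A" and v: "v \<in> A" and Fe: "F u = F v"
    show "?psi u = ?psi v"
    proof (rule ext)
      fix m
      show "?psi u m = ?psi v m"
      proof (cases "m \<in> carrier G")
        case False thus ?thesis by simp
      next
        case m: True
        obtain d where d: "d \<in> G0" "greenL G m d" using G0rep[OF m] by blast
        have dc: "d \<in> carrier G" using d greenL_carrier by auto
        obtain n n' where n: "n \<in> carrier G" "m = n \<otimes> d" and n': "n' \<in> carrier G" "d = n' \<otimes> m"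
          using greenL_iff[OF m dc] d(2) by blast
        have pd: "?psi u d = ?psi v d" using Fe d(1) unfolding F_def restrict_def by metis
        have uc: "u \<in> carrier G" "v \<in> carrier G" using u v Ac by auto
        have mu: "m \<otimes> u = n \<otimes> (d \<otimes> u)" "m \<otimes> v = n \<otimes> (d \<otimes> v)" using n dc uc by (simp_all add: m_assoc)
        have du: "d \<otimes> u = n' \<otimes> (m \<otimes> u)" "d \<otimes> v = n' \<otimes> (m \<otimes> v)" using n' m uc by (simp_all add: m_assoc)
        show ?thesis
        proof (cases "m \<otimes> u \<in> I'")
          case True
          hence duI: "d \<otimes> u \<in> I'" using du(1) left_idealD[OF I' n'(1)] by simp
          hence "?psi v d = Some (r `` {d \<otimes> u})" using pd dc by simp
          hence dvI: "d \<otimes> v \<in> I'" and cl: "r `` {d \<otimes> v} = r `` {d \<otimes> u}" using dc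
            by (auto split: if_splits)
          have "(d \<otimes> u, d \<otimes> v) \<in> r" using eq_equiv_class_iff[OF eq' duI dvI] cl by simp
          hence "(n \<otimes> (d \<otimes> u), n \<otimes> (d \<otimes> v)) \<in> r" using lc n(1) by (simp add: lcong_def)
          hence "r `` {m \<otimes> u} = r `` {m \<otimes> v}" using mu equiv_class_eq[OF eq'] by simp
          moreover have "m \<otimes> v \<in> I'" using mu(2) left_idealD[OF I' n(1) dvI] by simp
          ultimately show ?thesis using True m by simp
        next
          case False
          hence duI: "d \<otimes> u \<notin> I'" using mu(1) left_idealD[OF I' n(1)] by metis
          hence "?psi v d = None" using pd dc by simp
          hence "d \<otimes> v \<notin> I'" using dc by (auto split: if_splits)
          hence "m \<otimes> v \<notin> I'" using du(2) left_idealD[OF I' n'(1)] by metis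
          thus ?thesis using False by simp
        qed
      qed
    qed
  qed
qed


lemma step:
  assumes finL: "finite (left_ideals G)"
    and I: "I \<in> left_ideals G" and I': "I' \<in> left_ideals G"
    and LI: "L \<subseteq> I" and I'_def: "I' = I - L"
    and eq': "equiv I' r" and lc: "lcong r" and fin': "finite (I' // r)"
    and eqk: "equiv L k" and lck: "\<forall>m\<in>carrier G. \<forall>u v. (u,v) \<in> k \<longrightarrow> m \<otimes> u \<in> L \<longrightarrow> m \<otimes> v \<in> L \<longrightarrow> (m \<otimes> u, m \<otimes> v) \<in> k"
    and fink: "finite (L // k)"
    and w: "w \<in> I" "w' \<in> I"
    and sep1: "w \<in> I' \<Longrightarrow> w' \<in> I' \<Longrightarrow> (w, w') \<notin> r"
    and sep2: "w \<in> L \<Longrightarrow> w' \<in> L \<Longrightarrow> (w, w') \<notin> k"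
    and neq: "w \<noteq> w'"
  shows "\<exists>\<rho>. equiv I \<rho> \<and> lcong \<rho> \<and> finite (I // \<rho>) \<and> (w, w') \<notin> \<rho>"
proof -
  have Ic: "I \<subseteq> carrier G" using left_ideal_carrier[OF I] .
  define psi where "psi u = (\<lambda>m. if m \<in> carrier G \<and> m \<otimes> u \<in> I' then Some (r `` {m \<otimes> u}) else None)" for u
  define \<rho> where "\<rho> = {(u,v). (u \<in> I' \<and> v \<in> I' \<and> (u,v) \<in> r) \<or> (u \<in> L \<and> v \<in> L \<and> psi u = psi v \<and> (u,v) \<in> k)}"
  have r_sub: "r \<subseteq> I' \<times> I'" and k_sub: "k \<subseteq> L \<times> L" using eq' eqk by (auto simp: equiv_def)
  have disj: "I' \<inter> L = {}" using I'_def by auto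
  have IU: "I = I' \<union> L" using I'_def LI by auto
  have eqv: "equiv I \<rho>"
  proof (rule equivI)
    show "\<rho> \<subseteq> I \<times> I" using r_sub k_sub IU by (auto simp: \<rho>_def)
    show "refl_on I \<rho>"
      using IU eq' eqk by (auto simp: refl_on_def \<rho>_def equiv_def)
    show "sym \<rho>"
      using eq' eqk unfolding sym_def \<rho>_def equiv_def by auto
    show "trans \<rho>"
    proof (rule transI)
      fix x y z assume "(x, y) \<in> \<rho>" "(y, z) \<in> \<rho>"
      have tr: "trans r" "trans k" using eq' eqk by (auto simp: equiv_def)
      thus "(x, z) \<in> \<rho>" using \<open>(x, y) \<in> \<rho>\<close> \<open>(y, z) \<in> \<rho>\<close> disj unfolding \<rho>_def
        by (auto dest: transD)
    qed
  qed
  have psi_shift: "psi (m \<otimes> u) n = psi u (n \<otimes> m)" if "m \<in> carrier G" "u \<in> carrier G" "n \<in> carrier G" for m u n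
    using that by (simp add: psi_def m_assoc)
  have lcr: "lcong \<rho>"
    unfolding lcong_def
  proof (intro ballI allI impI)
    fix m u v assume m: "m \<in> carrier G" and uv: "(u, v) \<in> \<rho>"
    show "(m \<otimes> u, m \<otimes> v) \<in> \<rho>"
    proof (cases "u \<in> I' \<and> v \<in> I' \<and> (u,v) \<in> r")
      case True
      hence "m \<otimes> u \<in> I'" "m \<otimes> v \<in> I'" "(m \<otimes> u, m \<otimes> v) \<in> r"
        using left_idealD[OF I' m] lc m by (auto simp: lcong_def)
      thus ?thesis by (simp add: \<rho>_def)
    next
      case False
      hence uv2: "u \<in> L" "v \<in> L" "psi u = psi v" "(u,v) \<in> k" using uv by (auto simp: \<rho>_def)
      have uc: "u \<in> carrier G" "v \<in> carrier G" using uv2 LI Ic by auto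
      have pm: "psi u m = psi v m" using uv2 by simp
      show ?thesis
      proof (cases "m \<otimes> u \<in> I'")
        case True
        hence "psi v m = Some (r `` {m \<otimes> u})" using pm m by (simp add: psi_def)
        hence mv: "m \<otimes> v \<in> I'" and cl: "r `` {m \<otimes> v} = r `` {m \<otimes> u}"
          using m by (auto simp: psi_def split: if_splits)
        have "(m \<otimes> u, m \<otimes> v) \<in> r" using eq_equiv_class_iff[OF eq' True mv] cl by simp
        thus ?thesis using True mv by (simp add: \<rho>_def)
      next
        case False
        hence "psi v m = None" using pm m by (simp add: psi_def)
        hence mv: "m \<otimes> v \<notin> I'" using m by (auto simp: psi_def split: if_splits)
        have muL: "m \<otimes> u \<in> L" using False left_idealD[OF I m] uv2 LI IU by blast
        have mvL: "m \<otimes> v \<in> L" using mv left_idealD[OF I m] uv2 LI IU by blast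
        have "psi (m \<otimes> u) = psi (m \<otimes> v)"
        proof (rule ext)
          fix n show "psi (m \<otimes> u) n = psi (m \<otimes> v) n"
          proof (cases "n \<in> carrier G")
            case True thus ?thesis using psi_shift m uc uv2(3) by simp
          next
            case False thus ?thesis by (simp add: psi_def)
          qed
        qed
        moreover have "(m \<otimes> u, m \<otimes> v) \<in> k" using lck m uv2 muL mvL by blast
        ultimately show ?thesis using muL mvL by (simp add: \<rho>_def)
      qed
    qed
  qed
  have fin: "finite (I // \<rho>)"
  proof -
    have cls1: "\<rho> `` {x} = r `` {x}" if "x \<in> I'" for x
      using that disj r_sub by (auto simp: \<rho>_def)
    have cls2: "\<rho> `` {x} = {v \<in> L. psi v = psi x} \<inter> k `` {x}" if "x \<in> L" for x
      using that disj k_sub by (auto simp: \<rho>_def)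
    have f1: "finite ((\<lambda>x. \<rho> `` {x}) ` I')"
    proof -
      have "(\<lambda>x. \<rho> `` {x}) ` I' = I' // r" using cls1 by (auto simp: quotient_def)
      thus ?thesis using fin' by simp
    qed
    have finpsi: "finite (psi ` L)"
      unfolding psi_def using finite_psi[OF finL I' eq' lc fin'] LI Ic by blast
    have f2: "finite ((\<lambda>x. \<rho> `` {x}) ` L)"
    proof (rule finite_image_label[of "\<lambda>x. (psi x, k `` {x})"])
      have "(\<lambda>x. (psi x, k `` {x})) ` L \<subseteq> (psi ` L) \<times> (L // k)" by (auto simp: quotient_def)
      moreover have "finite ((psi ` L) \<times> (L // k))" using finpsi fink by simp
      ultimately show "finite ((\<lambda>x. (psi x, k `` {x})) ` L)" using finite_subset by blast
      fix u v assume "u \<in> L" "v \<in> L" "(psi u, k `` {u}) = (psi v, k `` {v})"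
      thus "\<rho> `` {u} = \<rho> `` {v}" using cls2 by simp
    qed
    have "I // \<rho> = (\<lambda>x. \<rho> `` {x}) ` I' \<union> (\<lambda>x. \<rho> `` {x}) ` L"
      using IU by (auto simp: quotient_def)
    thus ?thesis using f1 f2 by simp
  qed
  have "(w, w') \<notin> \<rho>"
    using sep1 sep2 disj by (auto simp: \<rho>_def)
  thus ?thesis using eqv lcr fin by blast
qed

end



context monoid
begin

lemma ideal_sep:
  assumes rfg: "\<forall>x\<in>carrier G. residually_finite_group (schutz_group G (Hclass G x))"
    and finL: "finite (left_ideals G)" and finR: "finite (right_ideals G)"
  shows "I \<in> left_ideals G \<Longrightarrow> w \<in> I \<Longrightarrow> w' \<in> I \<Longrightarrow> w \<noteq> w' \<Longrightarrow>
     \<exists>\<rho>. equiv I \<rho> \<and> lcong \<rho> \<and> finite (I // \<rho>) \<and> (w, w') \<notin> \<rho>"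
proof (induction "card {J \<in> left_ideals G. J \<subseteq> I}" arbitrary: I w w' rule: less_induct)
  case less
  note I = less.prems(1)
  have Ic: "I \<subseteq> carrier G" using left_ideal_carrier[OF I] .
  have "lprinc G ` I \<subseteq> left_ideals G" using lprinc_left_ideal Ic by auto
  hence "finite (lprinc G ` I)" using finL by (rule finite_subset)
  moreover have "lprinc G ` I \<noteq> {}" using less.prems(2) by blast
  ultimately obtain P where P: "P \<in> lprinc G ` I" and Pmax: "\<forall>Q\<in>lprinc G ` I. P \<subseteq> Q \<longrightarrow> P = Q"
    using finite_has_maximal[of "lprinc G ` I"] by auto
  obtain u0 where u0: "u0 \<in> I" "P = lprinc G u0" using P by blast
  have u0c: "u0 \<in> carrier G" using u0 Ic by auto
  define L where "L = {v. greenL G u0 v}"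
  define I' where "I' = I - L"
  have LI: "L \<subseteq> I"
  proof
    fix v assume "v \<in> L"
    hence "greenL G u0 v" by (simp add: L_def)
    hence "v \<in> carrier G" "\<exists>a\<in>carrier G. v = a \<otimes> u0" using greenL_iff u0c greenL_carrier by blast+
    thus "v \<in> I" using left_idealD[OF I] u0 by blast
  qed
  have lprinc_sub: "lprinc G (m \<otimes> v) \<subseteq> lprinc G v" if "m \<in> carrier G" "v \<in> carrier G" for m v
    using that by (auto simp: lprinc_def m_assoc[symmetric])
  have I': "I' \<in> left_ideals G"
    unfolding left_ideals_def
  proof (intro CollectI conjI ballI)
    show "I' \<subseteq> carrier G" using Ic I'_def by auto
    fix m v assume m: "m \<in> carrier G" and v: "v \<in> I'"
    have vI: "v \<in> I" "v \<notin> L" using v I'_def by auto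
    have vc: "v \<in> carrier G" using vI Ic by auto
    have mvI: "m \<otimes> v \<in> I" using left_idealD[OF I m vI(1)] .
    have "m \<otimes> v \<notin> L"
    proof
      assume "m \<otimes> v \<in> L"
      hence "lprinc G (m \<otimes> v) = P" using u0 by (simp add: L_def greenL_def)
      hence "P \<subseteq> lprinc G v" using lprinc_sub m vc by blast
      hence "P = lprinc G v" using Pmax vI by blast
      hence "v \<in> L" using u0 u0c vc by (simp add: L_def greenL_def)
      thus False using vI by simp
    qed
    thus "m \<otimes> v \<in> I'" using mvI I'_def by simp
  qed
  have u0L: "u0 \<in> L" using u0c by (simp add: L_def greenL_refl)
  have lt: "card {J \<in> left_ideals G. J \<subseteq> I'} < card {J \<in> left_ideals G. J \<subseteq> I}"
  proof (rule psubset_card_mono)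
    show "finite {J \<in> left_ideals G. J \<subseteq> I}" using finL by simp
    have "I \<notin> {J \<in> left_ideals G. J \<subseteq> I'}" using u0L u0 I'_def by auto
    moreover have "I \<in> {J \<in> left_ideals G. J \<subseteq> I}" using I by simp
    moreover have "{J \<in> left_ideals G. J \<subseteq> I'} \<subseteq> {J \<in> left_ideals G. J \<subseteq> I}" using I'_def by auto
    ultimately show "{J \<in> left_ideals G. J \<subseteq> I'} \<subset> {J \<in> left_ideals G. J \<subseteq> I}" by blast
  qed
  obtain r where r: "equiv I' r" "lcong r" "finite (I' // r)"
    and rsep: "w \<in> I' \<Longrightarrow> w' \<in> I' \<Longrightarrow> (w, w') \<notin> r"
  proof (cases "w \<in> I' \<and> w' \<in> I'")
    case True
    thus ?thesis using less.hyps[OF lt I'] less.prems(4) that by blast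
  next
    case False
    have "equiv I' (I' \<times> I')" by (auto simp: equiv_def refl_on_def sym_def trans_def)
    moreover have "lcong (I' \<times> I')" using left_idealD[OF I'] by (auto simp: lcong_def)
    moreover have "finite (I' // (I' \<times> I'))"
    proof -
      have "I' // (I' \<times> I') \<subseteq> {I'}" by (auto simp: quotient_def)
      thus ?thesis using finite_subset by blast
    qed
    ultimately show ?thesis using that False by blast
  qed
  obtain k where k: "equiv L k" "\<forall>m\<in>carrier G. \<forall>u v. (u,v) \<in> k \<longrightarrow> m \<otimes> u \<in> L \<longrightarrow> m \<otimes> v \<in> L \<longrightarrow> (m \<otimes> u, m \<otimes> v) \<in> k"
    "finite (L // k)" and ksep: "w \<in> L \<Longrightarrow> w' \<in> L \<Longrightarrow> (w, w') \<notin> k"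
  proof (cases "w \<in> L \<and> w' \<in> L \<and> greenR G w w'")
    case True
    hence tt: "w \<in> L" "w' \<in> L" "greenR G w w'" by auto
    obtain \<kappa> where "equiv L \<kappa>" "\<forall>m\<in>carrier G. \<forall>u v. (u,v) \<in> \<kappa> \<longrightarrow> m \<otimes> u \<in> L \<longrightarrow> m \<otimes> v \<in> L \<longrightarrow> (m \<otimes> u, m \<otimes> v) \<in> \<kappa>"
      "finite (L // \<kappa>)" "(w, w') \<notin> \<kappa>"
      using kappa_G[OF rfg finR u0c L_def tt less.prems(4)] by blast
    thus ?thesis by (intro that[of \<kappa>])
  next
    case False
    have Lc: "L \<subseteq> carrier G" using LI Ic by auto
    note kr = kappa_R[OF finR Lc]
    show ?thesis
    proof (rule that[of "{(u,v). u \<in> L \<and> v \<in> L \<and> greenR G u v}"])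
      show "equiv L {(u,v). u \<in> L \<and> v \<in> L \<and> greenR G u v}" using kr by (elim conjE)
      show "\<forall>m\<in>carrier G. \<forall>u v. (u,v) \<in> {(u,v). u \<in> L \<and> v \<in> L \<and> greenR G u v} \<longrightarrow> m \<otimes> u \<in> L \<longrightarrow> m \<otimes> v \<in> L
          \<longrightarrow> (m \<otimes> u, m \<otimes> v) \<in> {(u,v). u \<in> L \<and> v \<in> L \<and> greenR G u v}" using kr by (elim conjE)
      show "finite (L // {(u,v). u \<in> L \<and> v \<in> L \<and> greenR G u v})" using kr by (elim conjE)
      show "w \<in> L \<Longrightarrow> w' \<in> L \<Longrightarrow> (w, w') \<notin> {(u,v). u \<in> L \<and> v \<in> L \<and> greenR G u v}" using False by simp
    qed
  qed
  show ?case
    by (rule step[OF finL I I' LI I'_def r k less.prems(2,3) rsep ksep less.prems(4)])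
qed

end



context monoid
begin

lemma backward_direction:
  assumes rfg: "\<forall>x\<in>carrier G. residually_finite_group (schutz_group G (Hclass G x))"
    and finL: "finite (left_ideals G)" and finR: "finite (right_ideals G)"
  shows "residually_finite_monoid G"
  unfolding residually_finite_monoid_def
proof (intro ballI impI)
  fix x y assume x: "x \<in> carrier G" and y: "y \<in> carrier G" and xy: "x \<noteq> y"
  have CI: "carrier G \<in> left_ideals G" by (auto simp: left_ideals_def)
  obtain \<rho> where eq: "equiv (carrier G) \<rho>" and lc: "lcong \<rho>" and finQ: "finite (carrier G // \<rho>)"
    and sep: "(x, y) \<notin> \<rho>"
    using ideal_sep[OF rfg finL finR CI x y xy] by blast
  define Q where "Q = carrier G // \<rho>"
  define T :: "('a set \<Rightarrow> 'a set) monoid" where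
    "T = \<lparr>carrier = PiE Q (\<lambda>_. Q), mult = (\<lambda>f g. restrict (f \<circ> g) Q), one = restrict id Q\<rparr>"
  have monT: "monoid T"
  proof (rule monoidI)
    fix f g h assume f: "f \<in> carrier T" and g: "g \<in> carrier T" and h: "h \<in> carrier T"
    show "f \<otimes>\<^bsub>T\<^esub> g \<in> carrier T" using f g by (auto simp: T_def PiE_def Pi_def)
    show "f \<otimes>\<^bsub>T\<^esub> g \<otimes>\<^bsub>T\<^esub> h = f \<otimes>\<^bsub>T\<^esub> (g \<otimes>\<^bsub>T\<^esub> h)"
      using h by (auto simp: T_def PiE_def Pi_def restrict_def fun_eq_iff)
  next
    show "\<one>\<^bsub>T\<^esub> \<in> carrier T" by (auto simp: T_def)
  next
    fix f assume f: "f \<in> carrier T"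
    show "\<one>\<^bsub>T\<^esub> \<otimes>\<^bsub>T\<^esub> f = f" "f \<otimes>\<^bsub>T\<^esub> \<one>\<^bsub>T\<^esub> = f"
      using f by (auto simp: T_def PiE_def Pi_def restrict_def fun_eq_iff extensional_def)
  qed
  have finT: "finite (carrier T)" using finQ by (simp add: T_def Q_def finite_PiE)
  define rep where "rep C = (SOME c. c \<in> C)" for C :: "'a set"
  have repQ: "rep C \<in> C \<and> rep C \<in> carrier G \<and> C = \<rho> `` {rep C}" if CQ: "C \<in> Q" for C
  proof -
    obtain c where c: "c \<in> carrier G" "C = \<rho> `` {c}" using CQ by (auto simp: Q_def quotient_def)
    have "c \<in> C" using c eq by (auto simp: equiv_def refl_on_def)
    hence rC: "rep C \<in> C" unfolding rep_def by (rule someI)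
    hence crep: "(c, rep C) \<in> \<rho>" using c(2) by blast
    hence "rep C \<in> carrier G" using eq by (auto simp: equiv_def)
    moreover have "\<rho> `` {c} = \<rho> `` {rep C}" using equiv_class_eq[OF eq crep] .
    ultimately show ?thesis using c(2) rC by blast
  qed
  define \<tau> where "\<tau> z = restrict (\<lambda>C. \<rho> `` {z \<otimes> rep C}) Q" for z
  have clQ: "\<rho> `` {c} \<in> Q" if "c \<in> carrier G" for c using that by (simp add: Q_def quotientI)
  have tau_eval: "\<tau> z (\<rho> `` {c}) = \<rho> `` {z \<otimes> c}" if z: "z \<in> carrier G" and c: "c \<in> carrier G" for z c
  proof -
    define d where "d = rep (\<rho> `` {c})"
    have d: "d \<in> \<rho> `` {c}" "d \<in> carrier G" using repQ[OF clQ[OF c]] unfolding d_def by blast+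
    hence "(c, d) \<in> \<rho>" by simp
    hence "(z \<otimes> c, z \<otimes> d) \<in> \<rho>" using lc z by (simp add: lcong_def)
    hence "\<rho> `` {z \<otimes> d} = \<rho> `` {z \<otimes> c}" using equiv_class_eq[OF eq] by blast
    thus ?thesis using clQ[OF c] by (simp add: \<tau>_def d_def)
  qed
  have tauC: "\<tau> z \<in> carrier T" if z: "z \<in> carrier G" for z
  proof -
    have "\<rho> `` {z \<otimes> rep C} \<in> Q" if "C \<in> Q" for C
      using repQ[OF that] z clQ by blast
    thus ?thesis by (auto simp: \<tau>_def T_def)
  qed
  have tau_ext: "\<tau> z = \<tau> z'" if "\<And>c. c \<in> carrier G \<Longrightarrow> \<tau> z (\<rho> `` {c}) = \<tau> z' (\<rho> `` {c})" for z z'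
  proof (rule ext)
    fix C show "\<tau> z C = \<tau> z' C"
    proof (cases "C \<in> Q")
      case True thus ?thesis using repQ[OF True] that by metis
    qed (simp add: \<tau>_def)
  qed
  have hom: "\<tau> \<in> hom G T"
  proof (rule homI)
    fix a assume "a \<in> carrier G" thus "\<tau> a \<in> carrier T" by (rule tauC)
  next
    fix a b assume a: "a \<in> carrier G" and b: "b \<in> carrier G"
    have "restrict (\<tau> a \<circ> \<tau> b) Q = \<tau> (a \<otimes> b)"
    proof (rule ext)
      fix C show "restrict (\<tau> a \<circ> \<tau> b) Q C = \<tau> (a \<otimes> b) C"
      proof (cases "C \<in> Q")
        case True
        then obtain c where c: "c \<in> carrier G" "C = \<rho> `` {c}" using repQ by blast
        thus ?thesis using True a b tau_eval clQ by (simp add: m_assoc)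
      qed (simp add: \<tau>_def)
    qed
    thus "\<tau> (a \<otimes> b) = \<tau> a \<otimes>\<^bsub>T\<^esub> \<tau> b" by (simp add: T_def)
  qed
  have one: "\<tau> \<one> = \<one>\<^bsub>T\<^esub>"
  proof (rule ext)
    fix C show "\<tau> \<one> C = \<one>\<^bsub>T\<^esub> C"
    proof (cases "C \<in> Q")
      case True
      then obtain c where c: "c \<in> carrier G" "C = \<rho> `` {c}" using repQ by blast
      thus ?thesis using True tau_eval by (simp add: T_def)
    qed (simp add: \<tau>_def T_def)
  qed
  have tne: "\<tau> x \<noteq> \<tau> y"
  proof
    assume "\<tau> x = \<tau> y"
    hence "\<tau> x (\<rho> `` {\<one>}) = \<tau> y (\<rho> `` {\<one>})" by simp
    hence "\<rho> `` {x} = \<rho> `` {y}" using tau_eval x y by simp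
    thus False using eq_equiv_class_iff[OF eq x y] sep by simp
  qed
  obtain N :: "nat monoid" and e where N: "monoid N" "finite (carrier N)" "e \<in> hom T N"
    "e \<one>\<^bsub>T\<^esub> = \<one>\<^bsub>N\<^esub>" "inj_on e (carrier T)"
    using transport[OF monT finT] by blast
  have "e \<circ> \<tau> \<in> mon_hom G N"
    using hom_compose[OF hom N(3)] one N(4) by (simp add: mon_hom_def)
  moreover have "(e \<circ> \<tau>) x \<noteq> (e \<circ> \<tau>) y" using tne N(5) tauC x y by (auto simp: inj_on_def)
  ultimately show "\<exists>(N :: nat monoid) h. monoid N \<and> finite (carrier N) \<and> h \<in> mon_hom G N \<and> h x \<noteq> h y"
    using N by blast
qed

end


theorem mainTheorem20:
  fixes M :: "('a, 'b) monoid_scheme"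
  assumes "monoid M"
    and "finite (left_ideals M)"
    and "finite (right_ideals M)"
  shows "residually_finite_monoid M \<longleftrightarrow>
           (\<forall>x\<in>carrier M. residually_finite_group (schutz_group M (Hclass M x)))"
proof -
  interpret monoid M by (rule assms(1))
  show ?thesis
    using forward_direction backward_direction assms(2,3) by blast
qed

end
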